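(* Let $p\ge1$ and $n>p$ be integers. Let $z$ be a real even eigenfunction of order $n$ with eigenvalue $\Lambda>0$, and write $$z=R+P,\qquad R(x)=\sum_{j=0}^{2p-1} r_j e^{i\lambda_j x},$$ where: - $\lambda_0,\dots,\lambda_{2p-1}$ are the distinct roots of $\lambda^{2p}=\Lambda$, and - $P$ is a polynomial. Then $R$ is even, so $R(x)=\rho(x^2)$ for a real-analytic function $\rho$. Moreover $$\rho^{(k)}(1)=0\qquad\text{for all }k\in\{n-p,\,n-p+1,\dots,n-1\}.$$
   Context: Fix an integer $p\ge1$. For an integer $k\ge p$ and real $\Lambda$, the differential operator on $[-1,1]$ is $$L^{2k}(\Lambda)=(-1)^k\frac{d^{2k}}{dx^{2k}}-\Lambda(-1)^{k-p}\frac{d^{2k-2p}}{dx^{2k-2p}}.$$ An eigenfunction of order $n$ with eigenvalue $\Lambda$ is a nonzero real $z\in C^{2n}[-1,1]$ such that: - $L^{2n}(\Lambda)z=0$ on $[-1,1]$, and - $z^{(j)}(\pm1)=0$ for $j=0,\dots,n-1$. Such $z$ is a linear combination of the exponentials $e^{i\lambda_j x}$ and a polynomial of degree at most $2n-2p-1$. *)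

theory Defs
  imports "HOL-Analysis.Analysis" "HOL-Computational_Algebra.Polynomial"
begin

definition real_analytic_on :: "real set \<Rightarrow> (real \<Rightarrow> real) \<Rightarrow> bool" where
  "real_analytic_on S f \<longleftrightarrow>
     (\<forall>x\<in>S. \<exists>(a::nat \<Rightarrow> real) d. d > 0 \<and>
        (\<forall>y. \<bar>y - x\<bar> < d \<longrightarrow> (\<lambda>k. a k * (y - x) ^ k) sums f y))"

definition eigenfunction :: "nat \<Rightarrow> nat \<Rightarrow> real \<Rightarrow> (real \<Rightarrow> real) \<Rightarrow> bool" where
  "eigenfunction p n Lam z \<longleftrightarrow> p \<le> n \<and>
     (\<exists>D :: nat \<Rightarrow> real \<Rightarrow> real.
        (\<forall>x\<in>{-1..1}. D 0 x = z x) \<and>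
        (\<forall>k<2*n. \<forall>x\<in>{-1..1}. (D k has_real_derivative D (Suc k) x) (at x within {-1..1})) \<and>
        continuous_on {-1..1} (D (2*n)) \<and>
        (\<forall>x\<in>{-1..1}. (-1)^n * D (2*n) x - Lam * (-1)^(n-p) * D (2*n-2*p) x = 0) \<and>
        (\<forall>j<n. D j (-1) = 0 \<and> D j 1 = 0)) \<and>
     (\<exists>x\<in>{-1..1}. z x \<noteq> 0)"

end

theory Submission
  imports Defs "HOL-Complex_Analysis.Complex_Analysis"
begin

definition ES :: "nat \<Rightarrow> (nat \<Rightarrow> complex) \<Rightarrow> (nat \<Rightarrow> complex) \<Rightarrow> complex \<Rightarrow> complex" where
  "ES m a \<mu> w = (\<Sum>j<m. a j * exp (\<mu> j * w))"

lemma ES_has_deriv: "(ES m a \<mu> has_field_derivative ES m (\<lambda>j. a j * \<mu> j) \<mu> w) (at w)"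
  unfolding ES_def
  by (auto intro!: derivative_eq_intros sum.cong simp: algebra_simps)

lemma ES_holo: "ES m a \<mu> holomorphic_on S"
  using ES_has_deriv holomorphic_on_def field_differentiable_def
  by (metis field_differentiable_at_within)

lemma ES_deriv: "deriv (ES m a \<mu>) = ES m (\<lambda>j. a j * \<mu> j) \<mu>"
  using ES_has_deriv DERIV_imp_deriv by blast

lemma ES_higher: "(deriv^^k) (ES m a \<mu>) = ES m (\<lambda>j. a j * \<mu> j ^ k) \<mu>"
proof (induction k)
  case 0 then show ?case by simp
next
  case (Suc k) then show ?case by (simp add: ES_deriv) (simp add: mult_ac)
qed

lemma ES_const: "(\<forall>j<m. \<mu> j ^ q = c) \<Longrightarrow> (deriv^^q) (ES m a \<mu>) w = c * ES m a \<mu> w"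
  unfolding ES_higher ES_def by (simp add: sum_distrib_left algebra_simps)

lemma poly_higher: "(deriv^^k) (poly (P::complex poly)) = poly ((pderiv^^k) P)"
proof (induction k)
  case 0 then show ?case by simp
next
  case (Suc k)
  have "deriv (poly ((pderiv ^^ k) P)) = poly (pderiv ((pderiv ^^ k) P))"
    by (simp add: fun_eq_iff DERIV_imp_deriv[OF poly_DERIV])
  then show ?case using Suc by simp
qed

lemma pderiv_pow_0: "(pderiv^^k) 0 = (0::'a::idom poly)"
  by (induction k) (auto simp: pderiv_0)

lemma pderiv_pow_zero: "degree (Q::'a::{idom,ring_char_0} poly) < k \<Longrightarrow> (pderiv^^k) Q = 0"
proof (induction k arbitrary: Q)
  case 0 then show ?case by simp
next
  case (Suc k)
  show ?case
  proof (cases "degree Q = 0")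
    case True
    then have "pderiv Q = 0" by (simp add: pderiv_eq_0_iff)
    then show ?thesis by (simp add: funpow_Suc_right pderiv_pow_0 del: funpow.simps)
  next
    case False
    then have "degree (pderiv Q) < k" using Suc.prems by (simp add: degree_pderiv)
    then show ?thesis using Suc.IH by (simp add: funpow_Suc_right del: funpow.simps)
  qed
qed

lemma degree_pderiv_pow: "degree ((pderiv^^k) (Q::'a::{idom,ring_char_0} poly)) = degree Q - k"
  by (induction k) (auto simp: degree_pderiv)

lemma poly_ode_zero:
  fixes Q :: "complex poly"
  assumes "(pderiv^^q) Q = smult c Q" "c \<noteq> 0" "q \<ge> 1"
  shows "Q = 0"
proof (rule ccontr)
  assume "Q \<noteq> 0"
  show False
  proof (cases "degree Q = 0")
    case True
    then have "(pderiv^^q) Q = 0" using assms(3) by (intro pderiv_pow_zero) simp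
    then show False using assms \<open>Q \<noteq> 0\<close> by simp
  next
    case False
    have "degree ((pderiv^^q) Q) = degree Q - q" by (rule degree_pderiv_pow)
    moreover have "degree (smult c Q) = degree Q" using assms(2) by simp
    ultimately show False using assms False by simp
  qed
qed

lemma ident_real:
  fixes f :: "complex \<Rightarrow> complex"
  assumes "f holomorphic_on UNIV" "\<And>x. x \<in> {-1<..<1} \<Longrightarrow> f (of_real x) = 0"
  shows "f w = 0"
proof (rule analytic_continuation[OF assms(1), where U="of_real ` {-1<..<1}" and \<xi>=0])
  show "0 islimpt (of_real ` {-1<..<(1::real)} :: complex set)"
    unfolding islimpt_approachable
  proof (intro allI impI)
    fix e :: real assume "e > 0"
    let ?x = "min (e/2) (1/2)"
    show "\<exists>x'\<in>(of_real ` {-1<..<(1::real)} :: complex set). x' \<noteq> 0 \<and> dist x' 0 < e"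
      by (rule bexI[where x="complex_of_real ?x"]) (use \<open>e>0\<close> in \<open>auto simp: dist_norm\<close>)
  qed
qed (use assms in auto)

lemma ES_eq:
  assumes "\<forall>j<m. \<mu> j ^ q = c" "\<forall>j<m. \<nu> j ^ q = c" "c \<noteq> 0" "q \<ge> 1"
    and "\<And>x. x \<in> {-1<..<1} \<Longrightarrow> ES m a \<mu> (of_real x) - ES m b \<nu> (of_real x) = poly Q (of_real x)"
  shows "ES m a \<mu> w = ES m b \<nu> w"
proof -
  have F: "ES m a \<mu> w - ES m b \<nu> w = poly Q w" for w
  proof -
    have "(\<lambda>w. ES m a \<mu> w - ES m b \<nu> w - poly Q w) holomorphic_on UNIV"
      by (intro holomorphic_intros ES_holo)
    from ident_real[OF this] assms(5) show ?thesis by simp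
  qed
  have "(deriv^^q) (\<lambda>w. ES m a \<mu> w - ES m b \<nu> w) w = c * (ES m a \<mu> w - ES m b \<nu> w)" for w
    by (subst higher_deriv_diff[where S=UNIV]) (auto simp: ES_holo ES_const[OF assms(1)] ES_const[OF assms(2)] algebra_simps)
  moreover have "(\<lambda>w. ES m a \<mu> w - ES m b \<nu> w) = poly Q" using F by auto
  ultimately have "poly ((pderiv^^q) Q) w = poly (smult c Q) w" for w
    by (simp add: poly_higher F)
  then have "(pderiv^^q) Q = smult c Q" by (simp add: poly_eq_poly_eq_iff[symmetric] fun_eq_iff)
  then have "Q = 0" using poly_ode_zero assms by blast
  then show ?thesis using F[of w] by simp
qed

lemma comp_vanish:
  fixes h f :: "complex \<Rightarrow> complex"
  assumes "h holomorphic_on UNIV" "f holomorphic_on S" "open S" "x0 \<in> S"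
    and "\<forall>j<n. (deriv^^j) h (f x0) = 0"
  shows "\<forall>j<n. (deriv^^j) (\<lambda>x. h (f x)) x0 = 0"
  using assms(1,5)
proof (induction n arbitrary: h)
  case 0 then show ?case by simp
next
  case (Suc n h)
  have hd: "deriv h holomorphic_on UNIV" using Suc.prems(1) by (intro holomorphic_deriv) auto
  have IH: "\<forall>j<n. (deriv^^j) (\<lambda>x. deriv h (f x)) x0 = 0"
  proof (rule Suc.IH[OF hd], intro allI impI)
    fix j assume "j < n"
    then show "(deriv ^^ j) (deriv h) (f x0) = 0" using Suc.prems(2)
      by (metis Suc_mono funpow_Suc_right o_apply)
  qed
  have fd: "deriv f holomorphic_on S" using assms(2,3) by (intro holomorphic_deriv)
  have hf: "(\<lambda>x. h (f x)) holomorphic_on S"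
    using holomorphic_on_compose[OF assms(2), of h] Suc.prems(1) holomorphic_on_subset
    by (auto simp: o_def)
  have hdf: "(\<lambda>x. deriv h (f x)) holomorphic_on S"
    using holomorphic_on_compose[OF assms(2), of "deriv h"] hd holomorphic_on_subset
    by (auto simp: o_def)
  have chain: "deriv (\<lambda>x. h (f x)) x = deriv h (f x) * deriv f x" if "x \<in> S" for x
  proof -
    have "f field_differentiable at x" using assms(2,3) that holomorphic_on_imp_differentiable_at by blast
    moreover have "h field_differentiable at (f x)" using Suc.prems(1) holomorphic_on_imp_differentiable_at by blast
    ultimately show ?thesis using deriv_chain[of f x h] by (simp add: o_def)
  qed
  show ?case
  proof (intro allI impI)
    fix j assume "j < Suc n"
    show "(deriv ^^ j) (\<lambda>x. h (f x)) x0 = 0"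
    proof (cases j)
      case 0 then show ?thesis using Suc.prems(2) by (metis funpow_0 zero_less_Suc)
    next
      case (Suc i)
      then have "i < n" using \<open>j < Suc n\<close> by simp
      have "(deriv ^^ j) (\<lambda>x. h (f x)) x0 = (deriv ^^ i) (deriv (\<lambda>x. h (f x))) x0"
        using Suc by (simp add: funpow_Suc_right del: funpow.simps)
      also have "\<dots> = (deriv ^^ i) (\<lambda>x. deriv h (f x) * deriv f x) x0"
        by (rule higher_deriv_transform_within_open[OF _ _ assms(3,4)])
           (auto intro!: holomorphic_intros hf hdf fd holomorphic_deriv assms(3) chain)
      also have "\<dots> = (\<Sum>l = 0..i. of_nat (i choose l) * (deriv ^^ l) (\<lambda>x. deriv h (f x)) x0 * (deriv ^^ (i-l)) (deriv f) x0)"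
        by (rule higher_deriv_mult[OF hdf fd assms(3,4)])
      also have "\<dots> = 0" using IH \<open>i < n\<close> by (intro sum.neutral) auto
      finally show ?thesis .
    qed
  qed
qed

definition EV :: "(complex \<Rightarrow> complex) \<Rightarrow> complex \<Rightarrow> complex" where
  "EV f u = (\<Sum>k. (deriv^^(2*k)) f 0 / fact (2*k) * u^k)"

lemma EV_sums:
  fixes f :: "complex \<Rightarrow> complex"
  assumes "f holomorphic_on UNIV" "\<And>w. f (-w) = f w"
  shows "(\<lambda>k. (deriv^^(2*k)) f 0 / fact (2*k) * (w^2)^k) sums f w"
proof -
  define a where "a m = (deriv^^m) f 0 / fact m" for m
  have S: "(\<lambda>m. a m * v^m) sums f v" for v
    using holomorphic_power_series[of f 0 "norm v + 1" v] assms(1) holomorphic_on_subset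
    by (auto simp: a_def)
  have "(\<lambda>m. (a m * w^m + a m * (-w)^m) / 2) sums ((f w + f (-w)) / 2)"
    by (intro sums_divide sums_add S)
  then have S2: "(\<lambda>m. (a m * w^m + a m * (-w)^m) / 2) sums f w" using assms(2) by simp
  have "(\<lambda>k. (\<lambda>m. (a m * w^m + a m * (-w)^m) / 2) (2*k)) sums f w"
  proof (subst sums_mono_reindex)
    show "(\<lambda>m. (a m * w^m + a m * (-w)^m) / 2) sums f w" by (rule S2)
    fix n assume "n \<notin> range ((*) (2::nat))"
    then have "odd n" by (metis dvd_mult_div_cancel rangeI)
    then show "(a n * w^n + a n * (-w)^n) / 2 = 0" by (simp add: power_minus_odd)
  qed (auto simp: strict_mono_def)
  moreover have "(\<lambda>m. (a m * w^m + a m * (-w)^m) / 2) (2*k) = (deriv^^(2*k)) f 0 / fact (2*k) * (w^2)^k" for k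
    by (simp add: a_def power_mult)
  ultimately show ?thesis by simp
qed

lemma EV_sq:
  fixes f :: "complex \<Rightarrow> complex"
  assumes "f holomorphic_on UNIV" "\<And>w. f (-w) = f w"
  shows "EV f (w^2) = f w"
  using EV_sums[OF assms] unfolding EV_def by (simp add: sums_iff)

lemma EV_holo:
  fixes f :: "complex \<Rightarrow> complex"
  assumes "f holomorphic_on UNIV" "\<And>w. f (-w) = f w"
  shows "EV f holomorphic_on UNIV"
proof -
  have "summable (\<lambda>k. (deriv^^(2*k)) f 0 / fact (2*k) * u^k)" for u
    using EV_sums[OF assms, of "csqrt u"] by (auto simp: sums_iff)
  then have "\<And>x. (EV f has_field_derivative (\<Sum>n. diffs (\<lambda>k. (deriv^^(2*k)) f 0 / fact (2*k)) n * x^n)) (at x)"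
    unfolding EV_def[abs_def] by (rule termdiffs_strong_converges_everywhere)
  then show ?thesis
    by (auto simp: holomorphic_on_open)
qed

lemma Re_higher:
  fixes g :: "complex \<Rightarrow> complex"
  assumes "g holomorphic_on UNIV"
  shows "(deriv^^k) (\<lambda>t. Re (g (of_real t))) = (\<lambda>t. Re ((deriv^^k) g (of_real t)))"
proof (induction k)
  case 0 then show ?case by simp
next
  case (Suc k)
  have "deriv (\<lambda>t. Re ((deriv^^k) g (of_real t))) t = Re ((deriv^^Suc k) g (of_real t))" for t
  proof -
    have "((deriv^^k) g has_field_derivative deriv ((deriv^^k) g) (of_real t)) (at (of_real t))"
      using has_field_derivative_higher_deriv[OF assms, of "of_real t" k] by simp
    then have "((\<lambda>x. (deriv^^k) g (of_real x)) has_vector_derivative deriv ((deriv^^k) g) (of_real t)) (at t)"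
      by (rule has_vector_derivative_real_field)
    then have "((\<lambda>x. Re ((deriv^^k) g (of_real x))) has_real_derivative Re (deriv ((deriv^^k) g) (of_real t))) (at t)"
      by (rule has_field_derivative_Re)
    then show ?thesis by (simp add: DERIV_imp_deriv)
  qed
  then show ?case by (simp only: funpow.simps o_apply Suc.IH)
qed

lemma Re_mult_ofr: "Re (w * complex_of_real r) = Re w * r" by simp

lemma real_analytic_Re:
  fixes g :: "complex \<Rightarrow> complex"
  assumes "g holomorphic_on UNIV"
  shows "real_analytic_on UNIV (\<lambda>t. Re (g (of_real t)))"
  unfolding real_analytic_on_def
proof
  fix x :: real
  define a where "a k = Re ((deriv^^k) g (of_real x) / fact k)" for k
  have "\<forall>y. \<bar>y - x\<bar> < 1 \<longrightarrow> (\<lambda>k. a k * (y - x) ^ k) sums Re (g (of_real y))"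
  proof (intro allI impI)
    fix y :: real
    have "(\<lambda>k. (deriv^^k) g (of_real x) / fact k * (of_real y - of_real x)^k) sums g (of_real y)"
      using holomorphic_power_series[of g "of_real x" "\<bar>y-x\<bar> + 1" "of_real y"] assms holomorphic_on_subset
      by (auto simp: dist_norm simp flip: of_real_diff)
    from sums_Re[OF this] have "(\<lambda>k. Re ((deriv^^k) g (of_real x) / fact k * of_real ((y - x)^k))) sums Re (g (of_real y))"
      by (simp flip: of_real_diff of_real_power)
    moreover have "Re ((deriv^^k) g (of_real x) / fact k * of_real ((y - x)^k)) = a k * (y - x) ^ k" for k
      proof -
      have f: "(fact k :: complex) = complex_of_real (fact k)" by simp
      show ?thesis unfolding a_def f by (rule Re_mult_ofr)
    qed
    ultimately show "(\<lambda>k. a k * (y - x) ^ k) sums Re (g (of_real y))" by simp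
  qed
  then show "\<exists>a d. d > 0 \<and> (\<forall>y. \<bar>y - x\<bar> < d \<longrightarrow> (\<lambda>k. a k * (y - x) ^ k) sums Re (g (of_real y)))"
    by (intro exI[of _ a] exI[of _ 1]) simp
qed

lemma D_rel:
  fixes D :: "nat \<Rightarrow> real \<Rightarrow> real" and Z :: "complex \<Rightarrow> complex"
  assumes "\<forall>k<N. \<forall>x\<in>{-1..1}. (D k has_real_derivative D (Suc k) x) (at x within {-1..1})"
    and "\<forall>x\<in>{-1..1}. of_real (D 0 x) = Z (of_real x)" and "Z holomorphic_on UNIV"
  shows "\<forall>k\<le>N. \<forall>x\<in>{-1..1}. of_real (D k x) = (deriv^^k) Z (of_real x)"
proof (intro allI impI)
  fix k assume "k \<le> N"
  then show "\<forall>x\<in>{-1..1}. of_real (D k x) = (deriv^^k) Z (of_real x)"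
  proof (induction k)
    case 0 then show ?case using assms(2) by simp
  next
    case (Suc k)
    then have IH: "\<forall>x\<in>{-1..1}. of_real (D k x) = (deriv^^k) Z (of_real x)" by simp
    show ?case
    proof
      fix x :: real assume x: "x \<in> {-1..1}"
      have "(D k has_real_derivative D (Suc k) x) (at x within {-1..1})" using assms(1) Suc x by auto
      then have d1: "((\<lambda>t. complex_of_real (D k t)) has_vector_derivative of_real (D (Suc k) x)) (at x within {-1..1})"
        by (rule has_vector_derivative_of_real)
      have "((deriv^^k) Z has_field_derivative deriv ((deriv^^k) Z) (of_real x)) (at (of_real x))"
        using has_field_derivative_higher_deriv[OF assms(3), of "of_real x" k] by simp
      then have d2: "((\<lambda>t. (deriv^^k) Z (of_real t)) has_vector_derivative (deriv^^Suc k) Z (of_real x)) (at x within {-1..1})"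
        by (simp add: has_vector_derivative_real_field)
      have d3: "((\<lambda>t. complex_of_real (D k t)) has_vector_derivative (deriv^^Suc k) Z (of_real x)) (at x within {-1..1})"
        by (rule has_vector_derivative_transform[OF x _ d2]) (use IH in auto)
      show "of_real (D (Suc k) x) = (deriv^^Suc k) Z (of_real x)"
        using vector_derivative_unique_within_closed_interval[of "-1" 1 x, OF _ _ d1[unfolded cbox_interval[symmetric]] d3[unfolded cbox_interval[symmetric]]] x
        by simp
    qed
  qed
qed

lemma sign_lemma: "p \<le> n \<Longrightarrow> (-1::complex)^n * (-1)^p = (-1)^(n-p)"
proof -
  assume "p \<le> n"
  then have "n = (n-p) + p" by simp
  then have "(-1::complex)^n * (-1)^p = (-1)^(n-p) * ((-1)^p * (-1)^p)" by (metis power_add mult.assoc)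
  also have "(-1::complex)^p * (-1)^p = 1" by (simp flip: power_add)
  finally show ?thesis by simp
qed

lemma ES_cnj: "ES m (\<lambda>j. cnj (a j)) (\<lambda>j. cnj (\<mu> j)) (of_real x) = cnj (ES m a \<mu> (of_real x))"
  by (simp add: ES_def exp_cnj)

lemma cnj_m1: "cnj ((-1::complex)^p) = (-1)^p" by (induction p) auto

lemma X:
  fixes Rf :: "complex \<Rightarrow> complex" and zx :: real
  assumes "Rf = ES m r \<mu>"
  and "Rf (of_real x) = of_real zx - poly P (of_real x)"
  shows "ES m r \<mu> (of_real x) - ES m (\<lambda>j. cnj (r j)) (\<lambda>j. cnj (\<mu> j)) (of_real x) = poly (map_poly cnj P - P) (of_real x)"
proof -
  have a: "cnj (poly P (of_real x)) = poly (map_poly cnj P) (of_real x)" using poly_cnj[of P "of_real x"] by simp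
  have "ES m r \<mu> (of_real x) - ES m (\<lambda>j. cnj (r j)) (\<lambda>j. cnj (\<mu> j)) (of_real x) = Rf (of_real x) - cnj (Rf (of_real x))"
    unfolding ES_cnj assms(1) ..
  also have "\<dots> = cnj (poly P (of_real x)) - poly P (of_real x)" unfolding assms(2) by simp
  also have "\<dots> = poly (map_poly cnj P - P) (of_real x)" unfolding a by simp
  finally show ?thesis .
qed

lemma ball_csqrt: "csqrt holomorphic_on ball 1 (1/2)"
proof (rule holomorphic_on_subset[OF holomorphic_on_csqrt])
  show "ball (1::complex) (1/2) \<subseteq> - \<real>\<^sub>\<le>\<^sub>0"
  proof (rule subsetI)
    fix u :: complex assume "u \<in> ball 1 (1/2)"
    then have "norm (1 - u) < 1/2" by (simp add: dist_norm)
    moreover have "\<bar>Re (1 - u)\<bar> \<le> norm (1 - u)" by (rule abs_Re_le_cmod)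
    ultimately have "Re u > 0" by simp
    then show "u \<in> - \<real>\<^sub>\<le>\<^sub>0" by (simp add: complex_nonpos_Reals_iff)
  qed
qed

theorem mainTheorem9:
  fixes p n :: nat and Lam :: real and z :: "real \<Rightarrow> real"
    and lam r :: "nat \<Rightarrow> complex" and P :: "complex poly"
  assumes "p \<ge> 1" and "n > p" and "Lam > 0"
    and "eigenfunction p n Lam z"
    and "\<forall>x\<in>{-1..1}. z (-x) = z x"
    and "\<forall>j<2*p. lam j ^ (2*p) = complex_of_real Lam"
    and "inj_on lam {..<2*p}"
    and "\<forall>x\<in>{-1..1}. complex_of_real (z x) =
           (\<Sum>j<2*p. r j * exp (\<i> * lam j * complex_of_real x)) + poly P (complex_of_real x)"
  shows "(\<forall>x::real. (\<Sum>j<2*p. r j * exp (\<i> * lam j * complex_of_real (-x)))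
                 = (\<Sum>j<2*p. r j * exp (\<i> * lam j * complex_of_real x)))
       \<and> (\<exists>\<rho> :: real \<Rightarrow> real. real_analytic_on UNIV \<rho>
            \<and> (\<forall>x::real. (\<Sum>j<2*p. r j * exp (\<i> * lam j * complex_of_real x))
                          = complex_of_real (\<rho> (x^2)))
            \<and> (\<forall>k\<in>{n-p..n-1}. (deriv ^^ k) \<rho> 1 = 0))"
proof -
  obtain D :: "nat \<Rightarrow> real \<Rightarrow> real" where
    D0: "\<forall>x\<in>{-1..1}. D 0 x = z x" and
    Dd: "\<forall>k<2*n. \<forall>x\<in>{-1..1}. (D k has_real_derivative D (Suc k) x) (at x within {-1..1})" and
    Dode: "\<forall>x\<in>{-1..1}. (-1)^n * D (2*n) x - Lam * (-1)^(n-p) * D (2*n-2*p) x = 0" and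
    Dbd: "\<forall>j<n. D j (-1) = 0 \<and> D j 1 = 0"
    using assms(4) unfolding eigenfunction_def by blast
  define \<mu> where "\<mu> j = \<i> * lam j" for j
  define Rf where "Rf = ES (2*p) r \<mu>"
  define Zc where "Zc w = Rf w + poly P w" for w
  define c where "c = (-1)^p * complex_of_real Lam"
  have Rf_eq: "(\<Sum>j<2*p. r j * exp (\<i> * lam j * w)) = Rf w" for w
    by (simp add: Rf_def ES_def \<mu>_def)
  have c0: "c \<noteq> 0" using assms(3) by (simp add: c_def)
  have hmu: "\<forall>j<2*p. \<mu> j ^ (2*p) = c"
  proof (intro allI impI)
    fix j assume "j < 2*p"
    have "\<mu> j ^ (2*p) = (\<i>^2)^p * lam j ^ (2*p)" by (simp add: \<mu>_def power_mult_distrib power_mult power_minus[of "(lam j)^2"])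
    then show "\<mu> j ^ (2*p) = c" using assms(6) \<open>j < 2*p\<close> by (simp add: c_def power_mult)
  qed
  have Rholo: "Rf holomorphic_on UNIV" by (simp add: Rf_def ES_holo)
  have Pholo: "poly P holomorphic_on UNIV" by (intro holomorphic_intros)
  have Zholo: "Zc holomorphic_on UNIV" unfolding Zc_def by (intro holomorphic_intros Rholo)
  have Zx: "\<forall>x\<in>{-1..1}. complex_of_real (z x) = Rf (of_real x) + poly P (of_real x)"
    using assms(8) Rf_eq by simp
  have DR: "\<forall>k\<le>2*n. \<forall>x\<in>{-1..1}. of_real (D k x) = (deriv^^k) Zc (of_real x)"
    by (rule D_rel[OF Dd]) (use D0 Zx Zholo in \<open>auto simp: Zc_def\<close>)
  have hderZ: "(deriv^^k) Zc w = ES (2*p) (\<lambda>j. r j * \<mu> j^k) \<mu> w + poly ((pderiv^^k) P) w" for k w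
  proof -
    have "(deriv^^k) Zc w = (deriv^^k) Rf w + (deriv^^k) (poly P) w"
      unfolding Zc_def by (rule higher_deriv_add[OF Rholo Pholo]) auto
    then show ?thesis by (simp add: Rf_def ES_higher poly_higher)
  qed
  have ESode: "(-1)^n * ES (2*p) (\<lambda>j. r j * \<mu> j^(2*n)) \<mu> w
       = of_real Lam * (-1)^(n-p) * ES (2*p) (\<lambda>j. r j * \<mu> j^(2*n-2*p)) \<mu> w" for w
  proof -
    have "(-1)^n * (r j * \<mu> j^(2*n)) * exp (\<mu> j * w)
        = of_real Lam * (-1)^(n-p) * (r j * \<mu> j^(2*n-2*p)) * exp (\<mu> j * w)" if "j < 2*p" for j
    proof -
      have "\<mu> j^(2*n) = \<mu> j^(2*p) * \<mu> j^(2*n-2*p)" using assms(2)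
        by (simp flip: power_add)
      also have "\<dots> = c * \<mu> j^(2*n-2*p)" using hmu that by simp
      finally have "(-1)^n * (r j * \<mu> j^(2*n)) = ((-1)^n * (-1)^p) * of_real Lam * (r j * \<mu> j^(2*n-2*p))"
        by (simp add: c_def mult_ac)
      also have "\<dots> = of_real Lam * (-1)^(n-p) * (r j * \<mu> j^(2*n-2*p))"
        using sign_lemma[of p n] assms(2) by simp
      finally show ?thesis by simp
    qed
    then show ?thesis unfolding ES_def sum_distrib_left
      by (intro sum.cong refl) (simp only: mult.assoc lessThan_iff)
  qed
  define W where "W = smult ((-1)^n) ((pderiv^^(2*n)) P) - smult (of_real Lam * (-1)^(n-p)) ((pderiv^^(2*n-2*p)) P)"
  have "poly W w = 0" for w
  proof (rule ident_real[of "poly W"])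
    show "poly W holomorphic_on UNIV" by (intro holomorphic_intros)
    fix x :: real assume x: "x \<in> {-1<..<1}"
    then have x': "x \<in> {-1..1}" by auto
    have "complex_of_real ((-1)^n * D (2*n) x - Lam * (-1)^(n-p) * D (2*n-2*p) x) = 0"
      using Dode x' by simp
    then have "(-1)^n * complex_of_real (D (2*n) x) - of_real Lam * (-1)^(n-p) * of_real (D (2*n-2*p) x) = 0"
      by simp
    then have "(-1)^n * (deriv^^(2*n)) Zc (of_real x) - of_real Lam * (-1)^(n-p) * (deriv^^(2*n-2*p)) Zc (of_real x) = 0"
      using DR x' by simp
    then show "poly W (of_real x) = 0"
      unfolding hderZ W_def using ESode[of "of_real x"] by (simp add: algebra_simps)
  qed
  then have W0: "W = 0" using poly_all_0_iff_0 by blast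
  define Q where "Q = (pderiv^^(2*n-2*p)) P"
  have "(pderiv^^(2*p)) Q = (pderiv^^(2*n)) P"
  proof -
    have e: "2*p + (2*n-2*p) = 2*n" using assms(2) by simp
    have "(pderiv^^(2*p)) ((pderiv^^(2*n-2*p)) P) = (pderiv^^(2*p + (2*n-2*p))) P"
      by (simp only: funpow_add o_apply)
    then show ?thesis unfolding Q_def e .
  qed
  also have "\<dots> = smult ((-1)^n * of_real Lam * (-1)^(n-p)) Q"
  proof -
    have "smult ((-1)^n) ((pderiv^^(2*n)) P) = smult (of_real Lam * (-1)^(n-p)) Q"
      using W0 unfolding W_def Q_def by simp
    then have "smult ((-1)^n) (smult ((-1)^n) ((pderiv^^(2*n)) P)) = smult ((-1)^n) (smult (of_real Lam * (-1)^(n-p)) Q)"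
      by simp
    then show ?thesis by (simp add: mult_ac flip: power_add mult_2)
  qed
  finally have "Q = 0" by (rule poly_ode_zero) (use assms in auto)
  then have Pder0: "(pderiv^^k) P = 0" if "k \<ge> 2*n-2*p" for k
  proof -
    have "(pderiv^^k) P = (pderiv^^(k - (2*n-2*p))) Q"
    proof -
      have e: "(k - (2*n-2*p)) + (2*n-2*p) = k" using that by simp
      have "(pderiv^^(k - (2*n-2*p))) ((pderiv^^(2*n-2*p)) P) = (pderiv^^((k - (2*n-2*p)) + (2*n-2*p))) P"
        by (simp only: funpow_add o_apply)
      then show ?thesis unfolding Q_def e by simp
    qed
    then show ?thesis using \<open>Q = 0\<close> by (simp add: pderiv_pow_0)
  qed
  have even: "Rf (-w) = Rf w" for w
  proof -
    have "Rf w = ES (2*p) r (\<lambda>j. - \<mu> j) w"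
      unfolding Rf_def
    proof (rule ES_eq[where Q="pcompose P [:0,-1:] - P"])
      show "\<forall>j<2*p. (- \<mu> j)^(2*p) = c" using hmu by simp
      fix x :: real assume x: "x \<in> {-1<..<1}"
      then have x1: "x \<in> {-1..1}" "-x \<in> {-1..1}" by auto
      have "ES (2*p) r (\<lambda>j. - \<mu> j) (of_real x) = Rf (of_real (-x))"
        by (simp add: Rf_def ES_def)
      moreover have "Rf (of_real x) + poly P (of_real x) = Rf (of_real (-x)) + poly P (of_real (-x))"
        using Zx x1 assms(5) by metis
      ultimately show "ES (2*p) r \<mu> (of_real x) - ES (2*p) r (\<lambda>j. - \<mu> j) (of_real x) = poly (pcompose P [:0,-1:] - P) (of_real x)"
        unfolding Rf_def by (simp add: poly_pcompose algebra_simps)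
    qed (use hmu c0 assms(1) in auto)
    also have "\<dots> = Rf (-w)" by (simp add: Rf_def ES_def)
    finally show ?thesis by simp
  qed
  have real: "Im (Rf (of_real x)) = 0" for x
  proof -
    have F: "Rf w = ES (2*p) (\<lambda>j. cnj (r j)) (\<lambda>j. cnj (\<mu> j)) w" for w
      unfolding Rf_def
    proof (rule ES_eq[where Q="map_poly cnj P - P"])
      show "\<forall>j<2*p. (cnj (\<mu> j))^(2*p) = c"
      proof (intro allI impI)
        fix j assume "j < 2*p"
        have "cnj (\<mu> j) ^ (2*p) = cnj (\<mu> j ^ (2*p))" by simp
        also have "\<dots> = c" using hmu \<open>j < 2*p\<close> cnj_m1[of p] by (simp add: c_def)
        finally show "cnj (\<mu> j) ^ (2*p) = c" .
      qed
      fix x :: real assume x: "x \<in> {-1<..<1}"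
      then have x1: "x \<in> {-1..1}" by auto
      have Rx: "Rf (of_real x) = of_real (z x) - poly P (of_real x)" using Zx x1 by simp
      show "ES (2*p) r \<mu> (of_real x) - ES (2*p) (\<lambda>j. cnj (r j)) (\<lambda>j. cnj (\<mu> j)) (of_real x) = poly (map_poly cnj P - P) (of_real x)"
        by (rule X[OF Rf_def Rx])
    qed (use hmu c0 assms(1) in auto)
    have "Rf (of_real x) = ES (2*p) (\<lambda>j. cnj (r j)) (\<lambda>j. cnj (\<mu> j)) (of_real x)" by (rule F)
    also have "\<dots> = cnj (Rf (of_real x))" unfolding ES_cnj Rf_def ..
    finally have "Im (Rf (of_real x)) = Im (cnj (Rf (of_real x)))" by (rule arg_cong)
    then show ?thesis by simp
  qed
  have Peven: "poly P (-w) = poly P w" for w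
  proof -
    have "poly P (-w) - poly P w = 0"
    proof (rule ident_real[of "\<lambda>w. poly P (-w) - poly P w"])
      show "(\<lambda>w. poly P (-w) - poly P w) holomorphic_on UNIV" by (intro holomorphic_intros)
      fix x :: real assume x: "x \<in> {-1<..<1}"
      then have x1: "x \<in> {-1..1}" "-x \<in> {-1..1}" by auto
      have "Rf (of_real x) + poly P (of_real x) = Rf (of_real (-x)) + poly P (of_real (-x))"
        using Zx x1 assms(5) by metis
      then show "poly P (- of_real x) - poly P (of_real x) = 0" using even[of "of_real x"] by simp
    qed
    then show ?thesis by simp
  qed
  define g where "g = EV Rf"
  have gholo: "g holomorphic_on UNIV" unfolding g_def by (rule EV_holo[OF Rholo even])
  have gsq: "g (w^2) = Rf w" for w unfolding g_def by (rule EV_sq[OF Rholo even])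
  define a where "a k = (deriv^^(2*k)) (poly P) 0 / fact (2*k)" for k
  define \<pi> where "\<pi> = (\<Sum>k<n-p. monom (a k) k)"
  have EVP: "EV (poly P) u = poly \<pi> u" for u
  proof -
    have "(\<lambda>k. a k * u^k) sums (\<Sum>k<n-p. a k * u^k)"
    proof (rule sums_finite)
      fix k assume "k \<notin> {..<n-p}"
      then have "(pderiv^^(2*k)) P = 0" by (intro Pder0) auto
      then show "a k * u^k = 0" by (simp add: a_def poly_higher)
    qed simp
    then show ?thesis unfolding EV_def \<pi>_def a_def[symmetric] by (simp add: sums_iff poly_sum poly_monom)
  qed
  have degpi: "degree \<pi> < n-p"
  proof -
    have "degree \<pi> \<le> n-p-1" unfolding \<pi>_def
      by (rule degree_sum_le) (auto intro: order.trans[OF degree_monom_le])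
    then show ?thesis using assms(2) by simp
  qed
  have Zsq: "Zc (csqrt u) = g u + poly \<pi> u" for u
  proof -
    have "Zc (csqrt u) = g ((csqrt u)^2) + EV (poly P) ((csqrt u)^2)"
      unfolding Zc_def gsq EV_sq[OF Pholo Peven] ..
    then show ?thesis by (simp add: EVP)
  qed
  have Z1: "\<forall>j<n. (deriv^^j) Zc (csqrt 1) = 0"
  proof (intro allI impI)
    fix j assume "j < n"
    then have "j \<le> 2*n" by simp
    then have "of_real (D j 1) = (deriv^^j) Zc (of_real 1)" using DR[rule_format, of j 1] by simp
    moreover have "D j 1 = 0" using Dbd \<open>j < n\<close> by blast
    ultimately show "(deriv^^j) Zc (csqrt 1) = 0" by simp
  qed
  have comp: "\<forall>j<n. (deriv^^j) (\<lambda>u. Zc (csqrt u)) 1 = 0"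
    by (rule comp_vanish[OF Zholo ball_csqrt _ _ Z1]) auto
  have gder: "(deriv^^k) g 1 = 0" if k: "k \<in> {n-p..n-1}" for k
  proof -
    have hz: "(\<lambda>u. g u + poly \<pi> u) holomorphic_on UNIV" by (intro holomorphic_intros gholo)
    have e: "(\<lambda>u. (g u + poly \<pi> u) - poly \<pi> u) = g" by simp
    have "(deriv^^k) (\<lambda>u. (g u + poly \<pi> u) - poly \<pi> u) 1 = (deriv^^k) (\<lambda>u. g u + poly \<pi> u) 1 - (deriv^^k) (\<lambda>u. poly \<pi> u) 1"
      by (rule higher_deriv_diff[OF hz _ open_UNIV]) (auto intro: holomorphic_intros)
    then have "(deriv^^k) g 1 = (deriv^^k) (\<lambda>u. g u + poly \<pi> u) 1 - (deriv^^k) (poly \<pi>) 1"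
      unfolding e by simp
    also have "(\<lambda>u. g u + poly \<pi> u) = (\<lambda>u. Zc (csqrt u))" using Zsq by auto
    also have "(deriv^^k) (\<lambda>u. Zc (csqrt u)) 1 = 0"
    proof -
      have "k < n" using k assms(2) by auto
      then show ?thesis using comp by blast
    qed
    also have "(deriv^^k) (poly \<pi>) 1 = 0"
      using pderiv_pow_zero[of \<pi> k] degpi k by (simp add: poly_higher)
    finally show ?thesis by simp
  qed
  define \<rho> where "\<rho> t = Re (g (of_real t))" for t
  show ?thesis
  proof (intro conjI exI[of _ \<rho>])
    show "\<forall>x::real. (\<Sum>j<2*p. r j * exp (\<i> * lam j * complex_of_real (-x)))
                 = (\<Sum>j<2*p. r j * exp (\<i> * lam j * complex_of_real x))"
      unfolding Rf_eq using even by simp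
    show "real_analytic_on UNIV \<rho>" unfolding \<rho>_def[abs_def] by (rule real_analytic_Re[OF gholo])
    show "\<forall>x::real. (\<Sum>j<2*p. r j * exp (\<i> * lam j * complex_of_real x)) = complex_of_real (\<rho> (x^2))"
    proof
      fix x :: real
      have "g (of_real (x^2)) = Rf (of_real x)" using gsq[of "of_real x"] by simp
      then show "(\<Sum>j<2*p. r j * exp (\<i> * lam j * complex_of_real x)) = complex_of_real (\<rho> (x^2))"
        unfolding Rf_eq \<rho>_def using real[of x] by (simp add: complex_eq_iff)
    qed
    show "\<forall>k\<in>{n-p..n-1}. (deriv ^^ k) \<rho> 1 = 0"
      unfolding \<rho>_def[abs_def] Re_higher[OF gholo] using gder by simp
  qed
qed

end
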